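(* Let $G$ be a context-free grammar over $B$ with axiom $S$, reduced to the nonterminals that are productive and reachable from $S$. Then $G$ is well-formed if and only if $G$ is bounded well-formed and the word $r_S$ associated with the axiom is $\varepsilon$.
   Context: Let $A$ be a finite alphabet of opening brackets, $\bar A=\{\bar a\mid a\in A\}$ a disjoint copy of closing brackets, $B=A\cup\bar A$. The reduction $\alpha a\bar a\beta\to\alpha\beta$ ($a\in A$; $\bar a a$ does not cancel) gives each $\alpha\in B^*$ a unique normal form $\rho(\alpha)$. A word $\alpha$ is well-formed if $\rho(\alpha)\in A^*$ and weakly well-formed if $\rho(\alpha)\in\bar A^*A^*$; a language is (weakly) well-formed if all its words are; a grammar $G$ is well-formed if $L(G)$ is, and weakly well-formed if $L(G)$ is. For $\alpha\in B^*$, $\mathrm{hd}(\alpha)=|\alpha|_A-|\alpha|_{\bar A}$. For a nonterminal $X$, $L_X$ is the language generated from $X$ and $d_X=\sup\{-\mathrm{hd}(\alpha')\mid \alpha'\alpha''\in L_X\}$. $G$ is bounded well-formed if it is weakly well-formed and for every nonterminal $X$ there is a (shortest) word $r_X\in A^*$ with $|r_X|=d_X$ such that $r_XL_X$ is well-formed. *)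

theory Defs
  imports Complex_Main "HOL-Library.Extended_Real"
begin

text \<open>Brackets: Op a is the opening bracket a in A, Cl a is its closing copy (a bar).
  The alphabet A is the (finite) type 'a.\<close>
datatype 'a br = Op 'a | Cl 'a

inductive red_step :: "'a br list \<Rightarrow> 'a br list \<Rightarrow> bool" where
  "red_step (u @ [Op a, Cl a] @ v) (u @ v)"

definition irreducible :: "'a br list \<Rightarrow> bool" where
  "irreducible w \<longleftrightarrow> (\<nexists>w'. red_step w w')"

definition rho :: "'a br list \<Rightarrow> 'a br list" where
  "rho w = (THE v. red_step\<^sup>*\<^sup>* w v \<and> irreducible v)"

definition is_open :: "'a br \<Rightarrow> bool" where
  "is_open x \<longleftrightarrow> (\<exists>a. x = Op a)"

definition is_close :: "'a br \<Rightarrow> bool" where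
  "is_close x \<longleftrightarrow> (\<exists>a. x = Cl a)"

definition well_formed :: "'a br list \<Rightarrow> bool" where
  "well_formed w \<longleftrightarrow> (\<forall>x \<in> set (rho w). is_open x)"

definition weakly_well_formed :: "'a br list \<Rightarrow> bool" where
  "weakly_well_formed w \<longleftrightarrow>
     (\<exists>u v. rho w = u @ v \<and> (\<forall>x \<in> set u. is_close x) \<and> (\<forall>x \<in> set v. is_open x))"

definition wf_lang :: "'a br list set \<Rightarrow> bool" where
  "wf_lang L \<longleftrightarrow> (\<forall>w \<in> L. well_formed w)"

definition wwf_lang :: "'a br list set \<Rightarrow> bool" where
  "wwf_lang L \<longleftrightarrow> (\<forall>w \<in> L. weakly_well_formed w)"

definition height :: "'a br list \<Rightarrow> int" where
  "height w = int (length (filter is_open w)) - int (length (filter is_close w))"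

text \<open>Context-free grammars over B: a finite set P of productions (X, rhs), where a right-hand
  side is a sentential form (Inl = nonterminal, Inr = terminal).\<close>
type_synonym ('n, 'a) prods = "('n \<times> ('n + 'a br) list) set"

inductive deriv_step :: "('n, 'a) prods \<Rightarrow> ('n + 'a br) list \<Rightarrow> ('n + 'a br) list \<Rightarrow> bool"
  for P where
  "(X, rhs) \<in> P \<Longrightarrow> deriv_step P (u @ [Inl X] @ v) (u @ rhs @ v)"

abbreviation derives :: "('n, 'a) prods \<Rightarrow> ('n + 'a br) list \<Rightarrow> ('n + 'a br) list \<Rightarrow> bool" where
  "derives P \<equiv> (deriv_step P)\<^sup>*\<^sup>*"

definition Lang :: "('n, 'a) prods \<Rightarrow> 'n \<Rightarrow> 'a br list set" where
  "Lang P X = {w. derives P [Inl X] (map Inr w)}"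

definition nts :: "('n, 'a) prods \<Rightarrow> 'n \<Rightarrow> 'n set" where
  "nts P S = {S} \<union> fst ` P \<union> {X. \<exists>(Y, rhs) \<in> P. Inl X \<in> set rhs}"

definition productive :: "('n, 'a) prods \<Rightarrow> 'n \<Rightarrow> bool" where
  "productive P X \<longleftrightarrow> Lang P X \<noteq> {}"

definition reachable :: "('n, 'a) prods \<Rightarrow> 'n \<Rightarrow> 'n \<Rightarrow> bool" where
  "reachable P S X \<longleftrightarrow> (\<exists>u v. derives P [Inl S] (u @ [Inl X] @ v))"

definition reduced :: "('n, 'a) prods \<Rightarrow> 'n \<Rightarrow> bool" where
  "reduced P S \<longleftrightarrow> (\<forall>X \<in> nts P S. productive P X \<and> reachable P S X)"

definition wf_grammar :: "('n, 'a) prods \<Rightarrow> 'n \<Rightarrow> bool" where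
  "wf_grammar P S \<longleftrightarrow> wf_lang (Lang P S)"

definition wwf_grammar :: "('n, 'a) prods \<Rightarrow> 'n \<Rightarrow> bool" where
  "wwf_grammar P S \<longleftrightarrow> wwf_lang (Lang P S)"

definition dX :: "('n, 'a) prods \<Rightarrow> 'n \<Rightarrow> ereal" where
  "dX P X = Sup {ereal (of_int (- height u)) | u v. u @ v \<in> Lang P X}"

definition good_r :: "('n, 'a) prods \<Rightarrow> 'n \<Rightarrow> 'a list \<Rightarrow> bool" where
  "good_r P X r \<longleftrightarrow> ereal (of_nat (length r)) = dX P X
      \<and> wf_lang ((\<lambda>w. map Op r @ w) ` Lang P X)"

definition bounded_wf :: "('n, 'a) prods \<Rightarrow> 'n \<Rightarrow> bool" where
  "bounded_wf P S \<longleftrightarrow> wwf_grammar P S \<and> (\<forall>X \<in> nts P S. \<exists>r. good_r P X r)"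

definition r_word :: "('n, 'a) prods \<Rightarrow> 'n \<Rightarrow> 'a list" where
  "r_word P X = (SOME r. good_r P X r)"

end

theory Submission
  imports Defs
begin

fun stp :: "'a br list \<Rightarrow> 'a br \<Rightarrow> 'a br list" where
  "stp (Op b # s) (Cl a) = (if a = b then s else Cl a # Op b # s)"
| "stp s x = x # s"

definition st :: "'a br list \<Rightarrow> 'a br list" where
  "st w = foldl stp [] w"

lemma stp_Op[simp]: "stp s (Op a) = Op a # s"
  by (cases "(s, Op a)" rule: stp.cases) auto

lemma red_lift: "red_step x y \<Longrightarrow> red_step (p @ x @ s) (p @ y @ s)"
proof (induction rule: red_step.induct)
  case (1 u a v)
  have "red_step ((p@u) @ [Op a, Cl a] @ (v@s)) ((p@u)@(v@s))" by (rule red_step.intros)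
  thus ?case by simp
qed

lemma reds_lift: "red_step\<^sup>*\<^sup>* x y \<Longrightarrow> red_step\<^sup>*\<^sup>* (p @ x @ s) (p @ y @ s)"
  by (induction rule: rtranclp_induct) (auto intro: rtranclp.rtrancl_into_rtrancl red_lift)

lemma st_red: "red_step x y \<Longrightarrow> st x = st y"
  by (induction rule: red_step.induct) (simp add: st_def)

lemma st_reds: "red_step\<^sup>*\<^sup>* x y \<Longrightarrow> st x = st y"
  by (induction rule: rtranclp_induct) (auto dest: st_red)

definition okst :: "'a br list \<Rightarrow> bool" where
  "okst s \<longleftrightarrow> (\<forall>p q a. s \<noteq> p @ Cl a # Op a # q)"

lemma okst_cons: assumes ok: "okst s" and c: "\<And>c s'. x = Cl c \<Longrightarrow> s \<noteq> Op c # s'"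
  shows "okst (x # s)"
  unfolding okst_def
proof (intro allI notI)
  fix p q c assume h2: "x # s = p @ Cl c # Op c # q"
  show False
  proof (cases p)
    case Nil
    then show False using h2 c[of c q] by simp
  next
    case (Cons y p')
    then have "s = p' @ Cl c # Op c # q" using h2 by simp
    thus False using ok unfolding okst_def by blast
  qed
qed

lemma stp_other: "(\<And>c s'. x = Cl c \<Longrightarrow> s \<noteq> Op c # s') \<Longrightarrow> stp s x = x # s"
  by (cases "(s, x)" rule: stp.cases) auto

lemma okst_step: assumes ok: "okst s" shows "okst (stp s x)"
proof (cases "\<exists>c s'. x = Cl c \<and> s = Op c # s'")
  case True
  then obtain c s' where h: "x = Cl c" "s = Op c # s'" by blast
  show ?thesis unfolding okst_def
  proof (intro allI notI)
    fix p q d assume "stp s x = p @ Cl d # Op d # q"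
    hence "s = (Op c # p) @ Cl d # Op d # q" using h by simp
    thus False using ok unfolding okst_def by blast
  qed
next
  case False
  then have "stp s x = x # s" by (intro stp_other) blast
  then show ?thesis using okst_cons[OF ok] False by auto
qed

lemma okst_fold: "okst s \<Longrightarrow> okst (foldl stp s w)"
  by (induction w arbitrary: s) (auto intro: okst_step)

lemma irred_rev: "okst s \<Longrightarrow> irreducible (rev s)"
proof -
  assume ok: "okst s"
  show ?thesis unfolding irreducible_def
  proof
    assume "\<exists>w'. red_step (rev s) w'"
    then obtain u a v where "rev s = u @ [Op a, Cl a] @ v" by (auto elim: red_step.cases)
    hence "s = rev (u @ [Op a, Cl a] @ v)" by (metis rev_rev_ident)
    hence "s = rev v @ Cl a # Op a # rev u" by simp
    thus False using ok by (auto simp: okst_def)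
  qed
qed

lemma irred_butlast: "irreducible (w @ [x]) \<Longrightarrow> irreducible w"
  unfolding irreducible_def using red_lift[of _ _ "[]" "[x]"] by auto

lemma irred_fix: "irreducible v \<Longrightarrow> st v = rev v"
proof (induction v rule: rev_induct)
  case Nil
  then show ?case by (simp add: st_def)
next
  case (snoc x w)
  have IH: "st w = rev w" using snoc irred_butlast by blast
  have e: "st (w @ [x]) = stp (rev w) x" using IH by (simp add: st_def)
  show ?case
  proof (cases "\<exists>c s'. x = Cl c \<and> rev w = Op c # s'")
    case True
    then obtain a s' where h: "x = Cl a" "rev w = Op a # s'" by blast
    have "w = rev s' @ [Op a]" using h by (metis rev_rev_ident rev.simps(2))
    hence "w @ [x] = rev s' @ [Op a, Cl a] @ []" using h by simp
    hence "red_step (w @ [x]) (rev s' @ [])" by (metis red_step.intros)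
    then show ?thesis using snoc.prems unfolding irreducible_def by blast
  next
    case False
    then have "stp (rev w) x = x # rev w" by (intro stp_other) blast
    then show ?thesis using e by simp
  qed
qed

lemma reds_st: "red_step\<^sup>*\<^sup>* w (rev (st w))"
proof (induction w rule: rev_induct)
  case Nil
  then show ?case by (simp add: st_def)
next
  case (snoc x w)
  have 1: "red_step\<^sup>*\<^sup>* (w@[x]) (rev (st w) @ [x])" using reds_lift[OF snoc, of "[]" "[x]"] by simp
  have e: "st (w @ [x]) = stp (st w) x" by (simp add: st_def)
  have 2: "red_step\<^sup>*\<^sup>* (rev (st w) @ [x]) (rev (stp (st w) x))"
  proof (cases "\<exists>c s'. x = Cl c \<and> st w = Op c # s'")
    case True
    then obtain a s' where h: "x = Cl a" "st w = Op a # s'" by blast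
    have "rev (st w) @ [x] = rev s' @ [Op a, Cl a] @ []" using h by simp
    hence "red_step (rev (st w) @ [x]) (rev s' @ [])" by (metis red_step.intros)
    then show ?thesis using h by simp
  next
    case False
    then have "stp (st w) x = x # st w" by (intro stp_other) blast
    then show ?thesis by simp
  qed
  show ?case using 1 2 e by simp
qed

lemma rho_st: "rho w = rev (st w)"
  unfolding rho_def
proof (rule the_equality)
  show "red_step\<^sup>*\<^sup>* w (rev (st w)) \<and> irreducible (rev (st w))"
    using reds_st irred_rev okst_fold[of "[]" w] by (auto simp: st_def okst_def)
next
  fix v assume "red_step\<^sup>*\<^sup>* w v \<and> irreducible v"
  then have "st w = st v" "st v = rev v" using st_reds irred_fix by auto
  then show "v = rev (st w)" by simp
qed

lemma wf_st: "well_formed w \<longleftrightarrow> (\<forall>x\<in>set (st w). is_open x)"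
  by (simp add: well_formed_def rho_st)


lemma open_or_close: "is_open x \<or> is_close x"
  by (cases x) (auto simp: is_open_def is_close_def)

lemma not_open_close: "is_open x \<Longrightarrow> \<not> is_close x"
  by (auto simp: is_open_def is_close_def)

lemma height_append: "height (u @ v) = height u + height v"
  by (simp add: height_def)

lemma height_Op[simp]: "height [Op a] = 1"
  by (simp add: height_def is_open_def is_close_def)

lemma height_Cl[simp]: "height [Cl a] = -1"
  by (simp add: height_def is_open_def is_close_def)

lemma height_Nil[simp]: "height [] = 0"
  by (simp add: height_def)

lemma height_Op_Cons[simp]: "height (Op a # w) = 1 + height w"
  by (simp add: height_def is_open_def is_close_def)

lemma height_Cl_Cons[simp]: "height (Cl a # w) = height w - 1"
  by (simp add: height_def is_open_def is_close_def)

lemma height_Cons: "height (x # w) = height [x] + height w"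
  by (cases x) auto

lemma height_stp: "height (stp s x) = height s + height [x]"
  by (cases "(s, x)" rule: stp.cases; cases x) auto

lemma height_fold: "height (foldl stp s w) = height s + height w"
proof (induction w arbitrary: s)
  case Nil
  then show ?case by simp
next
  case (Cons y w)
  have "height (y # w) = height [y] + height w" by (cases y) auto
  then show ?case using Cons.IH[of "stp s y"] height_stp[of s y] by simp
qed

lemma height_st: "height (st w) = height w"
  unfolding st_def by (simp add: height_fold)

lemma height_opens: "\<forall>x\<in>set s. is_open x \<Longrightarrow> height s = int (length s)"
proof -
  assume h: "\<forall>x\<in>set s. is_open x"
  then have "filter is_open s = s" by simp
  moreover have "\<forall>x\<in>set s. \<not> is_close x" using h not_open_close by blast
  then have "filter is_close s = []" by (simp add: filter_empty_conv)
  ultimately show ?thesis by (simp add: height_def)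
qed

lemma close_persist: "\<exists>x\<in>set s. is_close x \<Longrightarrow> \<exists>x\<in>set (foldl stp s v). is_close x"
proof (induction v arbitrary: s)
  case Nil
  then show ?case by simp
next
  case (Cons y v)
  have "\<exists>x\<in>set (stp s y). is_close x"
  proof (cases "\<exists>c s'. y = Cl c \<and> s = Op c # s'")
    case True
    then obtain a s' where h: "y = Cl a" "s = Op a # s'" by blast
    then show ?thesis using Cons.prems by (auto simp: is_close_def)
  next
    case False
    then have "stp s y = y # s" by (intro stp_other) blast
    then show ?thesis using Cons.prems by auto
  qed
  then show ?case using Cons.IH by simp
qed

lemma prefix_wf: "well_formed (u @ v) \<Longrightarrow> \<forall>x\<in>set (st u). is_open x"
proof (rule ccontr)
  assume wf: "well_formed (u @ v)" and "\<not> (\<forall>x\<in>set (st u). is_open x)"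
  then have "\<exists>x\<in>set (st u). is_close x" using open_or_close by blast
  then have "\<exists>x\<in>set (foldl stp (st u) v). is_close x" by (rule close_persist)
  moreover have "st (u @ v) = foldl stp (st u) v" by (simp add: st_def)
  ultimately obtain x where "x \<in> set (st (u @ v))" "is_close x" by auto
  moreover have "\<forall>x\<in>set (st (u @ v)). is_open x" using wf by (simp only: wf_st)
  ultimately show False using not_open_close by blast
qed

lemma height_prefix: "well_formed (u @ v) \<Longrightarrow> height u \<ge> 0"
proof -
  assume "well_formed (u @ v)"
  then have "height (st u) = int (length (st u))" using prefix_wf[of u v] height_opens[of "st u"] by blast
  then show ?thesis using height_st[of u] by linarith
qed

lemma fold_split:
  "(\<forall>u v. w = u @ v \<longrightarrow> height s1 + height u \<ge> 0) \<Longrightarrow>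
   foldl stp (s1 @ s2) w = foldl stp s1 w @ s2"
proof (induction w arbitrary: s1)
  case Nil
  then show ?case by simp
next
  case (Cons x w)
  have x1: "height s1 + height [x] \<ge> 0" using Cons.prems[rule_format, of "[x]" w] by simp
  have e: "stp (s1 @ s2) x = stp s1 x @ s2"
  proof (cases s1)
    case Nil
    then have hx: "height [x] \<ge> 0" using x1 by simp
    obtain a where "x = Op a"
    proof (cases x)
      case (Cl b)
      then show ?thesis using hx by simp
    qed
    then show ?thesis by simp
  next
    case (Cons y s1')
    note s1c = Cons
    show ?thesis
    proof (cases "\<exists>c s'. x = Cl c \<and> s1 = Op c # s'")
      case True
      then obtain a s' where h: "x = Cl a" "s1 = Op a # s'" by blast
      then show ?thesis by simp
    next
      case False
      then have a: "stp s1 x = x # s1" by (intro stp_other) blast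
      have "\<And>c s'. x = Cl c \<Longrightarrow> s1 @ s2 \<noteq> Op c # s'"
      proof
        fix c s' assume "x = Cl c" "s1 @ s2 = Op c # s'"
        then have "y = Op c" "s1 = Op c # s1'" using s1c by auto
        then show False using False \<open>x = Cl c\<close> by blast
      qed
      then have "stp (s1 @ s2) x = x # (s1 @ s2)" by (intro stp_other) blast
      then show ?thesis using a by simp
    qed
  qed
  have "\<forall>u v. w = u @ v \<longrightarrow> height (stp s1 x) + height u \<ge> 0"
  proof (intro allI impI)
    fix u v assume "w = u @ v"
    then have "x # w = (x # u) @ v" by simp
    then have "height s1 + height (x # u) \<ge> 0" using Cons.prems by blast
    moreover have "height (x#u) = height [x] + height u" by (rule height_Cons)
    moreover have "height (stp s1 x) = height s1 + height [x]" by (rule height_stp)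
    ultimately show "height (stp s1 x) + height u \<ge> 0" by linarith
  qed
  then have "foldl stp (stp s1 x @ s2) w = foldl stp (stp s1 x) w @ s2" by (rule Cons.IH)
  then show ?case using e by (simp only: foldl_Cons)
qed

lemma fold_opens: "foldl stp s (map Op x) = rev (map Op x) @ s"
  by (induction x arbitrary: s) (simp_all only: list.map foldl_Cons foldl_Nil stp_Op rev.simps append_assoc append.simps)

fun unb :: "'a br \<Rightarrow> 'a" where
  "unb (Op a) = a" | "unb (Cl a) = a"

lemma opens_map_eq: "\<forall>x\<in>set s. is_open x \<Longrightarrow> s = map Op (map unb s)"
proof (induction s)
  case Nil
  then show ?case by simp
next
  case (Cons y s)
  have "is_open y" using Cons.prems by simp
  then obtain a where "y = Op a" unfolding is_open_def by blast
  moreover have "s = map Op (map unb s)" using Cons.prems by (intro Cons.IH) simp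
  ultimately show ?case by simp
qed

lemma opens_map: "\<forall>x\<in>set s. is_open x \<Longrightarrow> \<exists>t. s = map Op t"
  using opens_map_eq by blast


lemma deriv_lift: "deriv_step P x y \<Longrightarrow> deriv_step P (p @ x @ s) (p @ y @ s)"
proof (induction rule: deriv_step.induct)
  case (1 X rhs u v)
  have "deriv_step P ((p@u) @ [Inl X] @ (v@s)) ((p@u) @ rhs @ (v@s))"
    using 1 by (rule deriv_step.intros)
  thus ?case by simp
qed

lemma derives_lift: "derives P x y \<Longrightarrow> derives P (p @ x @ s) (p @ y @ s)"
  by (induction rule: rtranclp_induct) (auto intro: rtranclp.rtrancl_into_rtrancl deriv_lift)

lemma derives_append: "derives P a a' \<Longrightarrow> derives P b b' \<Longrightarrow> derives P (a @ b) (a' @ b')"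
proof -
  assume h1: "derives P a a'" and h2: "derives P b b'"
  have "derives P ([] @ a @ b) ([] @ a' @ b)" using derives_lift[OF h1] .
  moreover have "derives P (a' @ b @ []) (a' @ b' @ [])" using derives_lift[OF h2] .
  ultimately show ?thesis by simp
qed

lemma derives_nts: "derives P [Inl S] g \<Longrightarrow> Inl X \<in> set g \<Longrightarrow> X \<in> nts P S"
proof (induction g arbitrary: X rule: rtranclp_induct)
  case base
  then show ?case by (simp add: nts_def)
next
  case (step y z)
  from step.hyps(2) obtain Y rhs u v where h: "(Y, rhs) \<in> P" "y = u @ [Inl Y] @ v" "z = u @ rhs @ v"
    by (auto elim: deriv_step.cases)
  show ?case
  proof (cases "Inl X \<in> set rhs")
    case True
    then show ?thesis using h(1) unfolding nts_def by blast
  next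
    case False
    then have "Inl X \<in> set y" using step.prems h by auto
    then show ?thesis by (rule step.IH)
  qed
qed

lemma derives_terminal:
  "(\<And>X. Inl X \<in> set g \<Longrightarrow> productive P X) \<Longrightarrow> \<exists>w. derives P g (map Inr w)"
proof (induction g)
  case Nil
  have "derives P [] (map Inr [])" by simp
  then show ?case by blast
next
  case (Cons y g)
  then obtain w where w: "derives P g (map Inr w)" by auto
  obtain w0 where w0: "derives P [y] (map Inr w0)"
  proof (cases y)
    case (Inl X)
    then have "productive P X" using Cons.prems by simp
    then obtain w0 where "w0 \<in> Lang P X" unfolding productive_def by blast
    then show ?thesis using that Inl unfolding Lang_def by blast
  next
    case (Inr t)
    have "derives P [y] (map Inr [t])" using Inr by simp
    then show ?thesis using that by blast
  qed
  have "derives P ([y] @ g) (map Inr w0 @ map Inr w)" using derives_append[OF w0 w] .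
  then have "derives P (y # g) (map Inr (w0 @ w))" by simp
  then show ?case by blast
qed

lemma context_words:
  assumes red: "reduced P S" and X: "X \<in> nts P S"
  shows "\<exists>\<alpha> \<beta>. \<forall>w \<in> Lang P X. w \<in> Lang P X \<and> (\<alpha> @ w @ \<beta>) \<in> Lang P S"
proof -
  have "reachable P S X" using red X unfolding reduced_def by blast
  then obtain u v where uv: "derives P [Inl S] (u @ [Inl X] @ v)" unfolding reachable_def by blast
  have "\<And>Y. Inl Y \<in> set u \<Longrightarrow> productive P Y"
  proof -
    fix Y assume "Inl Y \<in> set u"
    then have "Inl Y \<in> set (u @ [Inl X] @ v)" by simp
    then have "Y \<in> nts P S" using derives_nts[OF uv] by blast
    then show "productive P Y" using red unfolding reduced_def by blast
  qed
  then obtain \<alpha> where a: "derives P u (map Inr \<alpha>)" using derives_terminal by blast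
  have "\<And>Y. Inl Y \<in> set v \<Longrightarrow> productive P Y"
  proof -
    fix Y assume "Inl Y \<in> set v"
    then have "Inl Y \<in> set (u @ [Inl X] @ v)" by simp
    then have "Y \<in> nts P S" using derives_nts[OF uv] by blast
    then show "productive P Y" using red unfolding reduced_def by blast
  qed
  then obtain \<beta> where b: "derives P v (map Inr \<beta>)" using derives_terminal by blast
  have "\<forall>w \<in> Lang P X. w \<in> Lang P X \<and> (\<alpha> @ w @ \<beta>) \<in> Lang P S"
  proof
    fix w assume w: "w \<in> Lang P X"
    then have dw: "derives P [Inl X] (map Inr w)" unfolding Lang_def by simp
    have "derives P (u @ [Inl X] @ v) (map Inr \<alpha> @ map Inr w @ map Inr \<beta>)"
      using derives_append[OF a derives_append[OF dw b]] .
    then have "derives P [Inl S] (map Inr (\<alpha> @ w @ \<beta>))" using uv by simp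
    then show "w \<in> Lang P X \<and> (\<alpha> @ w @ \<beta>) \<in> Lang P S" using w unfolding Lang_def by simp
  qed
  then show ?thesis by blast
qed


lemma exists_good:
  assumes wf: "wf_grammar P S" and red: "reduced P S" and X: "X \<in> nts P S"
  shows "\<exists>r. good_r P X r"
proof -
  obtain \<alpha> \<beta> where ab0: "\<forall>w \<in> Lang P X. (\<alpha> @ w @ \<beta>) \<in> Lang P S"
    using context_words[OF red X] by blast
  have ab: "\<And>w. w \<in> Lang P X \<Longrightarrow> well_formed (\<alpha> @ w @ \<beta>)"
    using ab0 wf unfolding wf_grammar_def wf_lang_def by blast
  have "productive P X" using red X unfolding reduced_def by blast
  then obtain w0 where w0: "w0 \<in> Lang P X" unfolding productive_def by blast
  have sa: "\<forall>x\<in>set (st \<alpha>). is_open x" using prefix_wf[of \<alpha> "w0 @ \<beta>"] ab[OF w0] by simp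
  obtain t where t: "st \<alpha> = map Op t" using opens_map[OF sa] by blast
  have ha: "height \<alpha> = int (length t)"
    using height_st[of \<alpha>] height_opens[OF sa] t by simp
  define I where "I = {- height u | u v. u @ v \<in> Lang P X}"
  have bound: "\<And>i. i \<in> I \<Longrightarrow> i \<le> int (length t)"
  proof -
    fix i assume "i \<in> I"
    then obtain u v where uv: "u @ v \<in> Lang P X" "i = - height u" unfolding I_def by blast
    have "well_formed ((\<alpha> @ u) @ (v @ \<beta>))" using ab[OF uv(1)] by simp
    then have "height (\<alpha> @ u) \<ge> 0" by (rule height_prefix)
    then show "i \<le> int (length t)" using uv(2) ha height_append[of \<alpha> u] by linarith
  qed
  have I0: "0 \<in> I" unfolding I_def using w0 by (intro CollectI exI[of _ "[]"] exI[of _ w0]) simp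
  define J where "J = I \<inter> {0..int (length t)}"
  have fJ: "finite J" unfolding J_def by simp
  have J0: "0 \<in> J" unfolding J_def using I0 by simp
  define d where "d = Max J"
  have dJ: "d \<in> J" unfolding d_def using fJ J0 by (intro Max_in) auto
  have dI: "d \<in> I" and d0: "d \<ge> 0" and dt: "d \<le> int (length t)" using dJ unfolding J_def by auto
  have dmax: "\<And>i. i \<in> I \<Longrightarrow> i \<le> d"
  proof -
    fix i assume i: "i \<in> I"
    show "i \<le> d"
    proof (cases "i \<ge> 0")
      case True
      then have "i \<in> J" unfolding J_def using i bound[OF i] by simp
      then show ?thesis unfolding d_def using fJ by (intro Max_ge)
    next
      case False
      then show ?thesis using d0 by simp
    qed
  qed
  define n where "n = nat d"
  define r where "r = rev (take n t)"
  have nt: "n \<le> length t" unfolding n_def using dt d0 by simp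
  have lr: "length r = n" unfolding r_def using nt by simp
  have dX: "dX P X = ereal (of_int d)"
    unfolding dX_def
  proof (rule Sup_eqI)
    fix y assume "y \<in> {ereal (of_int (- height u)) |u v. u @ v \<in> Lang P X}"
    then obtain u v where "u @ v \<in> Lang P X" "y = ereal (of_int (- height u))" by blast
    moreover then have "- height u \<in> I" unfolding I_def by blast
    then have "- height u \<le> d" by (rule dmax)
    then have "real_of_int (- height u) \<le> real_of_int d" by (simp only: of_int_le_iff)
    ultimately show "y \<le> ereal (of_int d)" by simp
  next
    fix y assume h: "\<And>z. z \<in> {ereal (of_int (- height u)) |u v. u @ v \<in> Lang P X} \<Longrightarrow> z \<le> y"
    obtain u v where "u @ v \<in> Lang P X" "d = - height u" using dI unfolding I_def by blast
    then show "ereal (of_int d) \<le> y" using h by blast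
  qed
  have len: "ereal (of_nat (length r)) = dX P X"
    using dX lr d0 unfolding n_def by simp
  have "\<forall>w \<in> Lang P X. well_formed (map Op r @ w)"
  proof
    fix w assume w: "w \<in> Lang P X"
    have str: "st (map Op r) = map Op (take n t)"
      unfolding st_def fold_opens r_def by (simp add: rev_map)
    have hpre: "\<forall>u v. w = u @ v \<longrightarrow> height (map Op (take n t)) + height u \<ge> 0"
    proof (intro allI impI)
      fix u v assume "w = u @ v"
      then have "- height u \<in> I" unfolding I_def using w by blast
      then have "- height u \<le> d" by (rule dmax)
      moreover have "height (map Op (take n t)) = int n"
        using height_opens[of "map Op (take n t)"] nt by (simp add: is_open_def)
      ultimately show "height (map Op (take n t)) + height u \<ge> 0" unfolding n_def using d0 by simp
    qed
    have "well_formed ((\<alpha> @ w) @ \<beta>)" using ab[OF w] by simp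
    then have op: "\<forall>x\<in>set (st (\<alpha> @ w)). is_open x" by (rule prefix_wf)
    have "st (\<alpha> @ w) = foldl stp (map Op (take n t) @ map Op (drop n t)) w"
      unfolding st_def foldl_append using t unfolding st_def by (simp add: map_append[symmetric])
    also have "\<dots> = foldl stp (map Op (take n t)) w @ map Op (drop n t)"
      using fold_split[OF hpre] .
    finally have "\<forall>x\<in>set (foldl stp (map Op (take n t)) w). is_open x" using op by simp
    moreover have "st (map Op r @ w) = foldl stp (map Op (take n t)) w"
      using str unfolding st_def by simp
    ultimately show "well_formed (map Op r @ w)" unfolding wf_st by simp
  qed
  then have "good_r P X r" unfolding good_r_def wf_lang_def using len by blast
  then show ?thesis by blast
qed

theorem lemma2:
  fixes P :: "('n, 'a :: finite) prods" and S :: 'n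
  assumes "finite P"
    and "reduced P S"
  shows "wf_grammar P S \<longleftrightarrow> (bounded_wf P S \<and> r_word P S = [])"
proof
  assume wf: "wf_grammar P S"
  have Snts: "S \<in> nts P S" unfolding nts_def by simp
  have wwf: "wwf_grammar P S"
    unfolding wwf_grammar_def wwf_lang_def weakly_well_formed_def
  proof
    fix w assume "w \<in> Lang P S"
    then have "well_formed w" using wf unfolding wf_grammar_def wf_lang_def by blast
    then have "rho w = [] @ rho w \<and> (\<forall>x \<in> set []. is_close x) \<and> (\<forall>x \<in> set (rho w). is_open x)"
      unfolding well_formed_def by simp
    then show "\<exists>u v. rho w = u @ v \<and> (\<forall>x \<in> set u. is_close x) \<and> (\<forall>x \<in> set v. is_open x)" by blast
  qed
  have bw: "bounded_wf P S" unfolding bounded_wf_def using wwf exists_good[OF wf assms(2)] by blast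
  have g: "good_r P S (r_word P S)" unfolding r_word_def
    using exists_good[OF wf assms(2) Snts] by (rule someI_ex)
  have "productive P S" using assms(2) Snts unfolding reduced_def by blast
  then obtain w0 where w0: "w0 \<in> Lang P S" unfolding productive_def by blast
  have "dX P S = 0"
    unfolding dX_def
  proof (rule Sup_eqI)
    fix y assume "y \<in> {ereal (of_int (- height u)) |u v. u @ v \<in> Lang P S}"
    then obtain u v where uv: "u @ v \<in> Lang P S" "y = ereal (of_int (- height u))" by blast
    then have "well_formed (u @ v)" using wf unfolding wf_grammar_def wf_lang_def by blast
    then have "height u \<ge> 0" by (rule height_prefix)
    then show "y \<le> 0" using uv(2) by simp
  next
    fix y assume h: "\<And>z. z \<in> {ereal (of_int (- height u)) |u v. u @ v \<in> Lang P S} \<Longrightarrow> z \<le> y"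
    have "ereal (of_int (- height ([] :: 'a br list))) \<in> {ereal (of_int (- height u)) |u v. u @ v \<in> Lang P S}"
      using w0 by fastforce
    then have "ereal (of_int (- height ([] :: 'a br list))) \<le> y" by (rule h)
    then show "0 \<le> y" by (simp add: zero_ereal_def)
  qed
  then have "length (r_word P S) = 0" using g unfolding good_r_def by simp
  then show "bounded_wf P S \<and> r_word P S = []" using bw by simp
next
  assume h: "bounded_wf P S \<and> r_word P S = []"
  have Snts: "S \<in> nts P S" unfolding nts_def by simp
  have "\<exists>r. good_r P S r" using h Snts unfolding bounded_wf_def by blast
  then have "good_r P S (r_word P S)" unfolding r_word_def by (rule someI_ex)
  then have "good_r P S []" using h by simp
  then show "wf_grammar P S" unfolding good_r_def wf_grammar_def by simp
qed

end
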